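(* Let $B=F(b_1,\ldots,b_n)$ be a Ferrers board with $0\le b_1\le\cdots\le b_n$ and $b_n>0$, and let $B^-=F(b_1,\ldots,b_{n-1})$. Then for all $1\le k\le n$, $$\mathbf{rT}_k(B,p,q)=\mathbf{rT}_k(B^-,p,q)+F_{b_{n-(k-1)}}(p,q)\,\mathbf{rT}_{k-1}(B^-,p,q).$$
   Context: For $m\ge 1$, a Fibonacci tiling of height $m$ is a tiling of a column of height $m$ by tiles of height 1 and height 2 whose bottom-most tile has height 1. For such a tiling $T$, $\mathrm{one}(T)$ and $\mathrm{two}(T)$ denote the numbers of tiles of height 1 and 2, and $F_m(p,q)=\sum_T q^{\mathrm{one}(T)}p^{\mathrm{two}(T)}$ over all Fibonacci tilings of height $m$ (so $F_1=q$, $F_2=q^2$, $F_m=qF_{m-1}+pF_{m-2}$ for $m\ge 3$). There are no Fibonacci tilings of height $0$, and $F_0(p,q)=0$. A Ferrers board $F(b_1,\ldots,b_n)$ is the board whose columns, from left to right, have heights $b_1,\ldots,b_n$. A Fibonacci rook placement of $k$ tilings in $B=F(b_1,\ldots,b_n)$ consists of a choice of columns $1\le i_1<\cdots<i_k\le n$ together with, for each $s=1,\ldots,k$, a Fibonacci tiling of height $b_{i_s-(s-1)}$ placed in column $i_s$ (this is the number of cells of column $i_s$ not canceled by the tilings in columns $i_1,\ldots,i_{s-1}$, where each tiling cancels top cells of the columns to its right so that after placing $s$ tilings the untiled columns have $b_1,\ldots,b_{n-s}$ uncanceled cells from left to right). Its weight is $q^{a}p^{b}$ where $a$ (resp. $b$)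 is the total number of tiles of height 1 (resp. 2) used. $\mathbf{rT}_k(B,p,q)$ is the sum of the weights of all Fibonacci rook placements of $k$ tilings in $B$ (the empty placement, $k=0$, has weight 1; the sum is $0$ if there are none). *)

theory Defs
  imports Main
begin

(* A Fibonacci tiling of height m: list of tile heights listed from bottom to top,
   each 1 or 2, summing to m, bottom-most tile of height 1. *)
definition fib_tilings :: "nat \<Rightarrow> nat list set" where
  "fib_tilings m = {t. t \<noteq> [] \<and> set t \<subseteq> {1,2} \<and> sum_list t = m \<and> hd t = 1}"

definition tweight :: "'a::comm_semiring_1 \<Rightarrow> 'a \<Rightarrow> nat list \<Rightarrow> 'a" where
  "tweight p q t = q ^ count_list t 1 * p ^ count_list t 2"

definition Fib :: "nat \<Rightarrow> 'a::comm_semiring_1 \<Rightarrow> 'a \<Rightarrow> 'a" where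
  "Fib m p q = (\<Sum>t\<in>fib_tilings m. tweight p q t)"

(* Ferrers board F(b_1,...,b_n) is the list b with b_i = b ! (i-1).
   A placement of k tilings: columns cs (1-indexed, strictly increasing, in {1..n})
   and tilings ts, the s-th (0-indexed) tiling having height b_{i_s - s}
   (1-indexed), i.e. list index cs!s - s - 1. *)
definition fib_placements :: "nat \<Rightarrow> nat list \<Rightarrow> (nat list \<times> nat list list) set" where
  "fib_placements k b = {(cs, ts). length cs = k \<and> length ts = k \<and> sorted_wrt (<) cs
      \<and> set cs \<subseteq> {1..length b}
      \<and> (\<forall>s<k. ts ! s \<in> fib_tilings (b ! (cs ! s - s - 1)))}"

definition placement_weight :: "'a::comm_semiring_1 \<Rightarrow> 'a \<Rightarrow> nat list list \<Rightarrow> 'a" where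
  "placement_weight p q ts =
     q ^ (\<Sum>t\<leftarrow>ts. count_list t 1) * p ^ (\<Sum>t\<leftarrow>ts. count_list t 2)"

definition rT :: "nat \<Rightarrow> nat list \<Rightarrow> 'a::comm_semiring_1 \<Rightarrow> 'a \<Rightarrow> 'a" where
  "rT k b p q = (\<Sum>(cs, ts)\<in>fib_placements k b. placement_weight p q ts)"

end

theory Submission
  imports Defs
begin

lemma len_le_sum: "set t \<subseteq> {1,2} \<Longrightarrow> length t \<le> sum_list (t::nat list)"
  by (induction t) auto

lemma finite_fib_tilings: "finite (fib_tilings m)"
proof -
  have "fib_tilings m \<subseteq> {t. set t \<subseteq> {1,2::nat} \<and> length t \<le> m}"
    unfolding fib_tilings_def using len_le_sum by fastforce
  then show ?thesis using finite_lists_length_le[of "{1,2::nat}" m] finite_subset by blast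
qed

lemma finite_fib_placements: "finite (fib_placements k b)"
proof -
  let ?M = "sum_list b"
  have "fib_placements k b \<subseteq> {cs. set cs \<subseteq> {1..length b} \<and> length cs \<le> k}
     \<times> {ts. set ts \<subseteq> {t. set t \<subseteq> {1,2::nat} \<and> length t \<le> ?M} \<and> length ts \<le> k}"
  proof
    fix x assume x: "x \<in> fib_placements k b"
    obtain cs ts where xe: "x = (cs, ts)" by force
    have c: "length cs = k" "length ts = k" "set cs \<subseteq> {1..length b}"
      "\<forall>s<k. ts ! s \<in> fib_tilings (b ! (cs ! s - s - 1))"
      using x unfolding xe fib_placements_def by auto
    have "set ts \<subseteq> {t. set t \<subseteq> {1,2::nat} \<and> length t \<le> ?M}"
    proof
      fix t assume "t \<in> set ts"
      then obtain s where s: "s < k" "t = ts ! s" using c by (metis in_set_conv_nth)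
      have "cs ! s \<in> set cs" using s c by simp
      hence "cs ! s \<in> {1..length b}" using c by blast
      hence "cs ! s - s - 1 < length b" by auto
      hence le: "b ! (cs ! s - s - 1) \<le> ?M" by (rule elem_le_sum_list)
      have "t \<in> fib_tilings (b ! (cs ! s - s - 1))" using c s by auto
      then show "t \<in> {t. set t \<subseteq> {1,2::nat} \<and> length t \<le> ?M}"
        unfolding fib_tilings_def using len_le_sum le by fastforce
    qed
    then show "x \<in> {cs. set cs \<subseteq> {1..length b} \<and> length cs \<le> k}
     \<times> {ts. set ts \<subseteq> {t. set t \<subseteq> {1,2::nat} \<and> length t \<le> ?M} \<and> length ts \<le> k}"
      using c xe by auto
  qed
  moreover have "finite ({cs. set cs \<subseteq> {1..length b} \<and> length cs \<le> k}
     \<times> {ts. set ts \<subseteq> {t. set t \<subseteq> {1,2::nat} \<and> length t \<le> ?M} \<and> length ts \<le> k})"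
    by (intro finite_cartesian_product finite_lists_length_le finite_lists_length_le[of "{1,2::nat}"]) auto
  ultimately show ?thesis using finite_subset by blast
qed

lemma partA:
  assumes "b \<noteq> []"
  shows "{x \<in> fib_placements k b. length b \<notin> set (fst x)} = fib_placements k (butlast b)"
proof -
  let ?n = "length b"
  have key: "\<And>cs s. set cs \<subseteq> {1..?n - 1} \<Longrightarrow> s < length cs \<Longrightarrow>
      butlast b ! (cs ! s - s - 1) = b ! (cs ! s - s - 1)"
  proof -
    fix cs :: "nat list" and s
    assume "set cs \<subseteq> {1..?n - 1}" "s < length cs"
    then have "cs ! s \<in> {1..?n-1}" using nth_mem by blast
    then have "cs ! s - s - 1 < length (butlast b)" by auto
    then show "butlast b ! (cs ! s - s - 1) = b ! (cs ! s - s - 1)" by (rule nth_butlast)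
  qed
  have sub: "\<And>cs::nat list. (set cs \<subseteq> {1..?n} \<and> ?n \<notin> set cs) = (set cs \<subseteq> {1..?n - 1})"
  proof (intro iffI)
    fix cs :: "nat list"
    show "set cs \<subseteq> {1..?n} \<and> ?n \<notin> set cs \<Longrightarrow> set cs \<subseteq> {1..?n - 1}"
    proof (intro conjI subsetI)
      fix x assume "set cs \<subseteq> {1..?n} \<and> ?n \<notin> set cs" and "x \<in> set cs"
      then have "x \<in> {1..?n}" "x \<noteq> ?n" by auto
      then show "x \<in> {1..?n-1}" by auto
    qed
  next
    fix cs :: "nat list"
    assume h: "set cs \<subseteq> {1..?n - 1}"
    show "set cs \<subseteq> {1..?n} \<and> ?n \<notin> set cs"
    proof
      show "set cs \<subseteq> {1..?n}" using h by force
      show "?n \<notin> set cs" using h assms by force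
    qed
  qed
  have "(cs, ts) \<in> fib_placements k b \<and> ?n \<notin> set cs \<longleftrightarrow> (cs, ts) \<in> fib_placements k (butlast b)"
    for cs ts
  proof
    assume h: "(cs, ts) \<in> fib_placements k b \<and> ?n \<notin> set cs"
    then have s1: "set cs \<subseteq> {1..?n - 1}" using sub unfolding fib_placements_def by blast
    have l: "length cs = k" using h unfolding fib_placements_def by blast
    show "(cs, ts) \<in> fib_placements k (butlast b)"
      using h s1 key[OF s1] l unfolding fib_placements_def by auto
  next
    assume h: "(cs, ts) \<in> fib_placements k (butlast b)"
    then have s1: "set cs \<subseteq> {1..?n - 1}" unfolding fib_placements_def by simp
    have l: "length cs = k" using h unfolding fib_placements_def by blast
    show "(cs, ts) \<in> fib_placements k b \<and> ?n \<notin> set cs"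
      using h s1 sub[of cs] key[OF s1] l unfolding fib_placements_def by auto
  qed
  then show ?thesis
    by (intro set_eqI) (metis (no_types, lifting) mem_Collect_eq prod.collapse)
qed

lemma partB:
  assumes "b \<noteq> []" "1 \<le> k"
  shows "{x \<in> fib_placements k b. length b \<in> set (fst x)} =
    (\<lambda>((cs,ts),t). (cs @ [length b], ts @ [t])) `
      (fib_placements (k-1) (butlast b) \<times> fib_tilings (b ! (length b - k)))"
proof -
  let ?n = "length b"
  have n1: "?n \<ge> 1" using assms by (cases b) auto
  have key: "\<And>cs s. set cs \<subseteq> {1..?n - 1} \<Longrightarrow> s < length cs \<Longrightarrow>
      butlast b ! (cs ! s - s - 1) = b ! (cs ! s - s - 1)"
  proof -
    fix cs :: "nat list" and s
    assume "set cs \<subseteq> {1..?n - 1}" "s < length cs"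
    then have "cs ! s \<in> {1..?n-1}" using nth_mem by blast
    then have "cs ! s - s - 1 < length (butlast b)" by auto
    then show "butlast b ! (cs ! s - s - 1) = b ! (cs ! s - s - 1)" by (rule nth_butlast)
  qed
  show ?thesis
  proof (rule set_eqI, rule iffI)
    fix x assume xin: "x \<in> {x \<in> fib_placements k b. length b \<in> set (fst x)}"
    obtain cs ts where xe: "x = (cs, ts)" by force
    have c: "length cs = k" "length ts = k" "sorted_wrt (<) cs" "set cs \<subseteq> {1..?n}"
      "\<forall>s<k. ts ! s \<in> fib_tilings (b ! (cs ! s - s - 1))" "?n \<in> set cs"
      using xin unfolding xe fib_placements_def by auto
    have "cs \<noteq> []" using c by auto
    then obtain cs' y where cse: "cs = cs' @ [y]" by (metis rev_exhaust)
    have "ts \<noteq> []" using c assms by auto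
    then obtain ts' t where tse: "ts = ts' @ [t]" by (metis rev_exhaust)
    have sw: "sorted_wrt (<) cs'" "\<forall>z\<in>set cs'. z < y" using c(3) unfolding cse
      by (auto simp: sorted_wrt_append)
    have yin: "y \<in> {1..?n}" using c(4) cse by auto
    have "?n \<notin> set cs'" using sw(2) yin by fastforce
    hence yn: "y = ?n" using c(6) cse by auto
    have cs'sub: "set cs' \<subseteq> {1..?n-1}" using c(4) sw(2) yn cse by fastforce
    have lc': "length cs' = k - 1" "length ts' = k - 1" using c cse tse by auto
    have "\<forall>s<k-1. ts' ! s \<in> fib_tilings (butlast b ! (cs' ! s - s - 1))"
    proof (intro allI impI)
      fix s assume s: "s < k - 1"
      have "ts ! s \<in> fib_tilings (b ! (cs ! s - s - 1))" using c(5) s by auto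
      then show "ts' ! s \<in> fib_tilings (butlast b ! (cs' ! s - s - 1))"
        using s lc' key[OF cs'sub, of s] unfolding cse tse by (simp add: nth_append)
    qed
    hence p1: "(cs', ts') \<in> fib_placements (k-1) (butlast b)"
      unfolding fib_placements_def using lc' sw(1) cs'sub by auto
    have "ts ! (k-1) \<in> fib_tilings (b ! (cs ! (k-1) - (k-1) - 1))"
      using c(5) assms by (meson diff_less less_numeral_extra(1) order_less_le_trans)
    hence "t \<in> fib_tilings (b ! (?n - k))"
      using lc' yn assms unfolding cse tse by (simp add: nth_append)
    with p1 show "x \<in> (\<lambda>((cs,ts),t). (cs @ [length b], ts @ [t])) `
      (fib_placements (k-1) (butlast b) \<times> fib_tilings (b ! (length b - k)))"
      unfolding xe cse tse yn by force
  next
    fix x assume "x \<in> (\<lambda>((cs,ts),t). (cs @ [length b], ts @ [t])) `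
      (fib_placements (k-1) (butlast b) \<times> fib_tilings (b ! (length b - k)))"
    then obtain cs ts t where xe: "x = (cs @ [?n], ts @ [t])"
      and p: "(cs, ts) \<in> fib_placements (k-1) (butlast b)" and t: "t \<in> fib_tilings (b ! (?n - k))"
      by auto
    have c: "length cs = k-1" "length ts = k-1" "sorted_wrt (<) cs" "set cs \<subseteq> {1..?n-1}"
      "\<forall>s<k-1. ts ! s \<in> fib_tilings (butlast b ! (cs ! s - s - 1))"
      using p unfolding fib_placements_def by auto
    have lt: "\<forall>z\<in>set cs. z < ?n" using c(4) n1 by fastforce
    have sw: "sorted_wrt (<) (cs @ [?n])" using c(3) lt by (simp add: sorted_wrt_append)
    have st: "set (cs @ [?n]) \<subseteq> {1..?n}" using c(4) n1 by force
    have tl: "\<forall>s<k. (ts @ [t]) ! s \<in> fib_tilings (b ! ((cs @ [?n]) ! s - s - 1))"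
    proof (intro allI impI)
      fix s assume s: "s < k"
      show "(ts @ [t]) ! s \<in> fib_tilings (b ! ((cs @ [?n]) ! s - s - 1))"
      proof (cases "s < k - 1")
        case True
        then have "ts ! s \<in> fib_tilings (b ! (cs ! s - s - 1))"
          using c(1,5) key[OF c(4), of s] by auto
        then show ?thesis using True c(1,2) by (simp add: nth_append)
      next
        case False
        then have "s = k - 1" using s by auto
        moreover have "?n - (k-1) - 1 = ?n - k" using assms by auto
        ultimately show ?thesis using c(1,2) t by (simp add: nth_append)
      qed
    qed
    show "x \<in> {x \<in> fib_placements k b. length b \<in> set (fst x)}"
      unfolding xe fib_placements_def using c(1,2) assms sw st tl by auto
  qed
qed

lemma pw_append: "placement_weight p q (ts @ [t]) = placement_weight p q ts * tweight p q t"
  unfolding placement_weight_def tweight_def by (simp add: power_add ac_simps)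

theorem theorem3:
  fixes b :: "nat list" and p q :: "'a::comm_semiring_1" and k :: nat
  assumes "sorted b" and "b \<noteq> []" and "last b > 0"
    and "1 \<le> k" and "k \<le> length b"
  shows "rT k b p q = rT k (butlast b) p q
           + Fib (b ! (length b - k)) p q * rT (k - 1) (butlast b) p q"
proof -
  let ?P = "fib_placements k b"
  let ?A = "{x \<in> ?P. length b \<notin> set (fst x)}"
  let ?B = "{x \<in> ?P. length b \<in> set (fst x)}"
  let ?T = "fib_tilings (b ! (length b - k))"
  let ?Q = "fib_placements (k-1) (butlast b)"
  let ?f = "\<lambda>((cs::nat list,ts::nat list list),t::nat list). (cs @ [length b], ts @ [t])"
  let ?g = "\<lambda>(cs::nat list, ts). placement_weight p q ts"
  have fin: "finite ?P" by (rule finite_fib_placements)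
  have "?P = ?A \<union> ?B" by auto
  hence "rT k b p q = sum ?g ?A + sum ?g ?B"
    unfolding rT_def using fin by (simp add: sum.union_disjoint[symmetric] Int_def)
  also have "sum ?g ?A = rT k (butlast b) p q"
    unfolding rT_def partA[OF assms(2)] ..
  also have "sum ?g ?B = sum (?g \<circ> ?f) (?Q \<times> ?T)"
    unfolding partB[OF assms(2,4)]
    by (rule sum.reindex) (auto simp: inj_on_def)
  also have "\<dots> = (\<Sum>x\<in>?Q. \<Sum>t\<in>?T. ?g x * tweight p q t)"
    by (subst sum.cartesian_product) (auto simp: pw_append intro!: sum.cong)
  also have "\<dots> = (\<Sum>x\<in>?Q. ?g x * Fib (b ! (length b - k)) p q)"
    unfolding Fib_def by (simp add: sum_distrib_left)
  also have "\<dots> = Fib (b ! (length b - k)) p q * rT (k - 1) (butlast b) p q"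
    unfolding rT_def by (simp add: sum_distrib_left mult.commute)
  finally show ?thesis .
qed

end
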